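(* Let $d\geq 0$ be an integer. Every $d$-degenerate graph $G$ with $n\geq d$ vertices satisfies $c(G)\leq 2^d(n-d+1)$.
   Context: All graphs are finite, simple and undirected. A graph $G$ is $d$-degenerate if every subgraph of $G$ has a vertex of degree at most $d$. A clique of a graph $G$ is a (possibly empty) set of pairwise adjacent vertices; $c(G)$ denotes the number of cliques of $G$ (including the empty clique, all single vertices and all edges). *)

theory Defs
  imports Main
begin

definition graph :: "'a set \<Rightarrow> 'a set set \<Rightarrow> bool" where
  "graph V E \<longleftrightarrow> finite V \<and> (\<forall>e\<in>E. e \<subseteq> V \<and> card e = 2)"

definition degree :: "'a set set \<Rightarrow> 'a \<Rightarrow> nat" where
  "degree E v = card {e\<in>E. v \<in> e}"

definition subgraph :: "'a set \<Rightarrow> 'a set set \<Rightarrow> 'a set \<Rightarrow> 'a set set \<Rightarrow> bool" where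
  "subgraph H F V E \<longleftrightarrow> graph H F \<and> H \<subseteq> V \<and> F \<subseteq> E"

definition degenerate :: "nat \<Rightarrow> 'a set \<Rightarrow> 'a set set \<Rightarrow> bool" where
  "degenerate d V E \<longleftrightarrow>
     (\<forall>H F. subgraph H F V E \<and> H \<noteq> {} \<longrightarrow> (\<exists>v\<in>H. degree F v \<le> d))"

definition is_clique :: "'a set \<Rightarrow> 'a set set \<Rightarrow> 'a set \<Rightarrow> bool" where
  "is_clique V E C \<longleftrightarrow> C \<subseteq> V \<and> (\<forall>u\<in>C. \<forall>v\<in>C. u \<noteq> v \<longrightarrow> {u, v} \<in> E)"

text \<open>Number of cliques, including the empty clique.\<close>
definition num_cliques :: "'a set \<Rightarrow> 'a set set \<Rightarrow> nat" where
  "num_cliques V E = card {C. is_clique V E C}"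

end

theory Submission
  imports Defs
begin

lemma cliques_sub_pow: "{C. is_clique V E C} \<subseteq> Pow V"
  by (auto simp: is_clique_def)

lemma nc_le_pow: "finite V \<Longrightarrow> num_cliques V E \<le> 2 ^ card V"
  unfolding num_cliques_def
  by (metis card_Pow card_mono cliques_sub_pow finite_Pow_iff)

lemma step:
  assumes g: "graph V E" and v: "v \<in> V"
  shows "num_cliques V E \<le> 2 ^ degree E v + num_cliques (V - {v}) {e\<in>E. v \<notin> e}"
proof -
  have fV: "finite V" using g by (simp add: graph_def)
  define N where "N = {u\<in>V. {u, v} \<in> E}"
  define A where "A = {C. is_clique V E C \<and> v \<in> C}"
  define B where "B = {C. is_clique V E C \<and> v \<notin> C}"
  have "num_cliques V E = card (A \<union> B)" unfolding num_cliques_def A_def B_def by (rule arg_cong[where f=card]) blast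
  also have "\<dots> \<le> card A + card B" by (rule card_Un_le)
  finally have "num_cliques V E \<le> card A + card B" .
  moreover have "B = {C. is_clique (V - {v}) {e\<in>E. v \<notin> e} C}"
    unfolding B_def is_clique_def by auto
  moreover have "card A \<le> 2 ^ degree E v"
  proof -
    have fN: "finite N" using fV N_def by simp
    have vN: "v \<notin> N"
    proof
      assume "v \<in> N"
      then have "{v} \<in> E" by (simp add: N_def)
      then show False using g by (auto simp: graph_def)
    qed
    have "inj_on (\<lambda>C. C - {v}) A" unfolding A_def inj_on_def by (metis (mono_tags, lifting) insert_Diff mem_Collect_eq)
    moreover have "(\<lambda>C. C - {v}) ` A \<subseteq> Pow N"
      unfolding A_def N_def is_clique_def by (auto simp: insert_commute)
    ultimately have "card A \<le> card (Pow N)"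
      by (meson card_inj_on_le fN finite_Pow_iff)
    also have "\<dots> = 2 ^ card N" using fN card_Pow by blast
    also have "card N \<le> degree E v"
    proof -
      have "inj_on (\<lambda>u. {u, v}) N" unfolding inj_on_def using vN
        by (metis doubleton_eq_iff)
      moreover have "(\<lambda>u. {u, v}) ` N \<subseteq> {e\<in>E. v \<in> e}" unfolding N_def by auto
      moreover have "finite {e\<in>E. v \<in> e}"
      proof -
        have "{e\<in>E. v \<in> e} \<subseteq> Pow V" using g by (auto simp: graph_def)
        then show ?thesis using fV finite_subset by blast
      qed
      ultimately show ?thesis unfolding degree_def by (meson card_inj_on_le)
    qed
    then have "(2::nat) ^ card N \<le> 2 ^ degree E v" by simp
    finally show ?thesis .
  qed
  ultimately show ?thesis unfolding num_cliques_def by simp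
qed

lemma main:
  "card V = n \<Longrightarrow> graph V E \<Longrightarrow> degenerate d V E \<Longrightarrow> d \<le> card V
   \<Longrightarrow> num_cliques V E \<le> 2 ^ d * (card V - d + 1)"
proof (induction n arbitrary: V E)
  case 0
  then show ?case using nc_le_pow[of V E] by (simp add: graph_def)
next
  case (Suc n)
  have fV: "finite V" using Suc.prems by (simp add: graph_def)
  show ?case
  proof (cases "card V = d")
    case True
    then show ?thesis using nc_le_pow[OF fV, of E] by simp
  next
    case False
    have "V \<noteq> {}" using Suc.prems by auto
    moreover have "subgraph V E V E" using Suc.prems by (simp add: subgraph_def)
    ultimately obtain v where v: "v \<in> V" "degree E v \<le> d"
      using Suc.prems(3) unfolding degenerate_def by blast
    define V' where "V' = V - {v}"
    define E' where "E' = {e\<in>E. v \<notin> e}"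
    have cV': "card V' = n" using Suc.prems(1) v fV by (simp add: V'_def)
    have g': "graph V' E'" using Suc.prems(2) unfolding graph_def V'_def E'_def by auto
    have dg': "degenerate d V' E'"
      unfolding degenerate_def
    proof (intro allI impI)
      fix H F assume a: "subgraph H F V' E' \<and> H \<noteq> {}"
      then have "subgraph H F V E \<and> H \<noteq> {}"
        by (auto simp: subgraph_def V'_def E'_def)
      then show "\<exists>v\<in>H. degree F v \<le> d" using Suc.prems(3) unfolding degenerate_def by blast
    qed
    have "d \<le> card V'" using cV' Suc.prems False by simp
    then have IH: "num_cliques V' E' \<le> 2 ^ d * (card V' - d + 1)"
      using Suc.IH[OF cV' g' dg'] by simp
    have "num_cliques V E \<le> 2 ^ degree E v + num_cliques V' E'"
      using step[OF Suc.prems(2) v(1)] by (simp add: V'_def E'_def)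
    also have "\<dots> \<le> 2 ^ d + 2 ^ d * (card V' - d + 1)"
      using IH v(2) by (simp add: add_mono power_increasing)
    also have "\<dots> = 2 ^ d * (card V - d + 1)"
      using cV' Suc.prems(1) \<open>d \<le> card V'\<close> by (simp add: Suc_diff_le)
    finally show ?thesis .
  qed
qed

theorem proposition2:
  fixes V :: "'a set" and E :: "'a set set" and d :: nat
  assumes "graph V E"
    and "degenerate d V E"
    and "card V \<ge> d"
  shows "num_cliques V E \<le> 2 ^ d * (card V - d + 1)"
  using main[OF refl assms] .

end
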